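(* Let $X$ be a Banach space supporting a hereditarily frequently hypercyclic operator. Let $T_1,\dots,T_N\in\mathfrak L(X)$ be such that $(T_1,\dots,T_N)$ is $d$-frequently hypercyclic. Then there exists $T_{N+1}\in\mathfrak L(X)$ such that $(T_1,\dots,T_{N+1})$ is $d$-frequently hypercyclic.
   Context: $\mathcal N_T(x,V):=\{n\in\mathbb N:T^nx\in V\}$. Hereditarily frequently hypercyclic: for every countable family $(V_i)$ of non-empty open sets and sets $A_i\subset\mathbb N$ of positive lower density, some $x$ has $\mathcal N_T(x,V_i)\cap A_i$ of positive lower density for all $i$. $(T_1,\dots,T_N)$ is $d$-frequently hypercyclic if there is $x\in X$ such that for every non-empty open $W\subset X^N$, the set $\{n:(T_1^nx,\dots,T_N^nx)\in W\}$ has positive lower density. *)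

theory Defs
  imports "HOL-Analysis.Analysis" "HOL-Library.Liminf_Limsup"
begin

definition lower_density :: "nat set \<Rightarrow> ereal" where
  "lower_density A = liminf (\<lambda>n. ereal (real (card (A \<inter> {..<n})) / real n))"

definition visits :: "('a \<Rightarrow> 'a) \<Rightarrow> 'a \<Rightarrow> 'a set \<Rightarrow> nat set" where
  "visits T x V = {n. (T ^^ n) x \<in> V}"

definition hereditarily_frequently_hypercyclic :: "('a::topological_space \<Rightarrow> 'a) \<Rightarrow> bool" where
  "hereditarily_frequently_hypercyclic T \<longleftrightarrow>
     (\<forall>V :: nat \<Rightarrow> 'a set. \<forall>A :: nat \<Rightarrow> nat set.
        (\<forall>i. open (V i) \<and> V i \<noteq> {} \<and> lower_density (A i) > 0) \<longrightarrow>
        (\<exists>x. \<forall>i. lower_density (visits T x (V i) \<inter> A i) > 0))"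

text \<open>The tuple (T 0, ..., T (N-1)) acting on X^N (product topology on {..<N} \<rightarrow> X).\<close>
definition d_frequently_hypercyclic :: "(nat \<Rightarrow> 'a::topological_space \<Rightarrow> 'a) \<Rightarrow> nat \<Rightarrow> bool" where
  "d_frequently_hypercyclic T N \<longleftrightarrow>
     (\<exists>x. \<forall>W. openin (product_topology (\<lambda>_. euclidean) {..<N}) W \<and> W \<noteq> {} \<longrightarrow>
        lower_density {n. (\<lambda>i\<in>{..<N}. (T i ^^ n) x) \<in> W} > 0)"

end

theory Submission
  imports Defs
begin

definition sublin :: "('a::real_vector \<Rightarrow> real) \<Rightarrow> bool" where
  "sublin q \<longleftrightarrow> (\<forall>a b. q (a + b) \<le> q a + q b) \<and> (\<forall>c a. c \<ge> 0 \<longrightarrow> q (c *\<^sub>R a) = c * q a)"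

lemma sublin_0: "sublin q \<Longrightarrow> q 0 = 0"
  unfolding sublin_def by (metis mult_zero_left order_refl scaleR_zero_left)

lemma sublin_neg: "sublin q \<Longrightarrow> - q (- w) \<le> q w"
proof -
  assume s: "sublin q"
  have "q (w + - w) \<le> q w + q (-w)" using s unfolding sublin_def by blast
  then show ?thesis using sublin_0[OF s] by simp
qed

definition rr :: "('a::real_vector \<Rightarrow> real) \<Rightarrow> 'a \<Rightarrow> 'a \<Rightarrow> real" where
  "rr q z w = (INF t\<in>{0..}. q (w + t *\<^sub>R z) - t * q z)"

lemma rr_bdd:
  assumes s: "sublin q"
  shows "bdd_below ((\<lambda>t. q (w + t *\<^sub>R z) - t * q z) ` {0..})"
proof (rule bdd_belowI2[where m="- q (- w)"])
  fix t :: real assume "t \<in> {0..}"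
  then have t: "t \<ge> 0" by simp
  have "q (t *\<^sub>R z) \<le> q (w + t *\<^sub>R z) + q (- w)"
    using s unfolding sublin_def by (metis add.commute diff_add_cancel diff_minus_eq_add minus_minus)
  then show "- q (- w) \<le> q (w + t *\<^sub>R z) - t * q z"
    using s t unfolding sublin_def by simp
qed

lemma rr_le: "sublin q \<Longrightarrow> t \<ge> 0 \<Longrightarrow> rr q z w \<le> q (w + t *\<^sub>R z) - t * q z"
  unfolding rr_def by (rule cINF_lower[OF rr_bdd]) auto

lemma rr_ge: "(\<And>t. t \<ge> 0 \<Longrightarrow> m \<le> q (w + t *\<^sub>R z) - t * q z) \<Longrightarrow> m \<le> rr q z w"
  unfolding rr_def by (rule cINF_greatest) auto

lemma rr_below: "sublin q \<Longrightarrow> rr q z w \<le> q w"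
  using rr_le[of q 0 z w] by simp

lemma rr_negz: "sublin q \<Longrightarrow> rr q z (- z) \<le> - q z"
  using rr_le[of q 1 z "-z"] sublin_0[of q] by simp

lemma rr_sublin:
  assumes s: "sublin q"
  shows "sublin (rr q z)"
  unfolding sublin_def
proof (intro conjI allI impI)
  fix a b
  have A: "rr q z (a + b) - (q (b + t *\<^sub>R z) - t * q z) \<le> q (a + s *\<^sub>R z) - s * q z"
    if "s \<ge> 0" "t \<ge> 0" for s t
  proof -
    have "rr q z (a + b) \<le> q ((a + b) + (s + t) *\<^sub>R z) - (s + t) * q z"
      using rr_le[OF s] that by simp
    also have "(a + b) + (s + t) *\<^sub>R z = (a + s *\<^sub>R z) + (b + t *\<^sub>R z)"
      by (simp add: algebra_simps)
    also have "q ((a + s *\<^sub>R z) + (b + t *\<^sub>R z)) \<le> q (a + s *\<^sub>R z) + q (b + t *\<^sub>R z)"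
      using s unfolding sublin_def by blast
    finally show ?thesis by (simp add: algebra_simps)
  qed
  have "rr q z (a + b) - (q (b + t *\<^sub>R z) - t * q z) \<le> rr q z a" if "t \<ge> 0" for t
    by (rule rr_ge) (use A that in auto)
  then have "rr q z (a + b) - rr q z a \<le> rr q z b"
    by (intro rr_ge) (auto simp: algebra_simps)
  then show "rr q z (a + b) \<le> rr q z a + rr q z b" by simp
next
  fix c :: real and a assume c: "c \<ge> 0"
  show "rr q z (c *\<^sub>R a) = c * rr q z a"
  proof (cases "c = 0")
    case True
    have "rr q z 0 = 0"
    proof (rule antisym)
      show "rr q z 0 \<le> 0" using rr_below[OF s, of z 0] sublin_0[OF s] by simp
      show "0 \<le> rr q z 0"
        by (rule rr_ge) (use s in \<open>auto simp: sublin_def\<close>)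
    qed
    then show ?thesis using True by simp
  next
    case False
    then have cp: "c > 0" using c by simp
    have "rr q z (c *\<^sub>R a) / c \<le> rr q z a"
    proof (rule rr_ge)
      fix t :: real assume t: "t \<ge> 0"
      have "rr q z (c *\<^sub>R a) \<le> q (c *\<^sub>R a + (c * t) *\<^sub>R z) - (c * t) * q z"
        using rr_le[OF s] t cp by simp
      also have "c *\<^sub>R a + (c * t) *\<^sub>R z = c *\<^sub>R (a + t *\<^sub>R z)"
        by (simp add: scaleR_add_right)
      also have "q (c *\<^sub>R (a + t *\<^sub>R z)) = c * q (a + t *\<^sub>R z)"
        using s c unfolding sublin_def by blast
      finally show "rr q z (c *\<^sub>R a) / c \<le> q (a + t *\<^sub>R z) - t * q z"
        using cp by (simp add: field_simps)
    qed
    moreover have "c * rr q z a \<le> rr q z (c *\<^sub>R a)"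
    proof (rule rr_ge)
      fix t :: real assume t: "t \<ge> 0"
      have "rr q z a \<le> q (a + (t / c) *\<^sub>R z) - (t / c) * q z"
        using rr_le[OF s, of "t / c" z a] t cp by simp
      then have "c * rr q z a \<le> c * q (a + (t / c) *\<^sub>R z) - t * q z"
        using cp by (simp add: field_simps)
      also have "c * q (a + (t / c) *\<^sub>R z) = q (c *\<^sub>R (a + (t / c) *\<^sub>R z))"
        using s c unfolding sublin_def by simp
      also have "c *\<^sub>R (a + (t / c) *\<^sub>R z) = c *\<^sub>R a + t *\<^sub>R z"
        using cp by (simp add: scaleR_add_right)
      finally show "c * rr q z a \<le> q (c *\<^sub>R a + t *\<^sub>R z) - t * q z" .
    qed
    ultimately show ?thesis using cp by (simp add: field_simps)
  qed
qed

lemma chain_inf_sublin: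
  assumes C: "C \<noteq> {}" "\<And>q. q \<in> C \<Longrightarrow> sublin q \<and> (\<forall>w. q w \<le> p w)"
    and ch: "\<And>q1 q2. q1 \<in> C \<Longrightarrow> q2 \<in> C \<Longrightarrow> (\<forall>w. q1 w \<le> q2 w) \<or> (\<forall>w. q2 w \<le> q1 w)"
  defines "g \<equiv> (\<lambda>w. INF q\<in>C. q w)"
  shows "sublin g" "\<And>q w. q \<in> C \<Longrightarrow> g w \<le> q w"
proof -
  have bdd: "bdd_below ((\<lambda>q. q w) ` C)" for w
  proof (rule bdd_belowI2[where m="- p (- w)"])
    fix q assume "q \<in> C"
    then have "q (- w) \<le> p (- w)" "sublin q" using C(2)[of q] by blast+
    then show "- p (- w) \<le> q w" using sublin_neg[of q w] by linarith
  qed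
  show low: "g w \<le> q w" if "q \<in> C" for q w
    unfolding g_def by (rule cINF_lower[OF bdd that])
  have gr: "m \<le> g w" if "\<And>q. q \<in> C \<Longrightarrow> m \<le> q w" for m w
    unfolding g_def by (rule cINF_greatest[OF C(1)]) (use that in auto)
  show "sublin g"
    unfolding sublin_def
  proof (intro conjI allI impI)
    fix a b
    have "g (a + b) \<le> q1 a + q2 b" if "q1 \<in> C" "q2 \<in> C" for q1 q2
    proof (cases "\<forall>w. q1 w \<le> q2 w")
      case True
      have "g (a + b) \<le> q1 (a + b)" using low that by blast
      also have "\<dots> \<le> q1 a + q1 b" using C(2)[OF that(1)] unfolding sublin_def by blast
      also have "\<dots> \<le> q1 a + q2 b" using True by simp
      finally show ?thesis .
    next
      case False
      then have F: "\<forall>w. q2 w \<le> q1 w" using ch[OF that] by blast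
      have "g (a + b) \<le> q2 (a + b)" using low that by blast
      also have "\<dots> \<le> q2 a + q2 b" using C(2)[OF that(2)] unfolding sublin_def by blast
      also have "\<dots> \<le> q1 a + q2 b" using F by simp
      finally show ?thesis .
    qed
    then have "g (a + b) - q2 b \<le> g a" if "q2 \<in> C" for q2
      using gr[of "g (a + b) - q2 b" a] that by force
    then have "g (a + b) - g a \<le> g b"
      using gr[of "g (a + b) - g a" b] by force
    then show "g (a + b) \<le> g a + g b" by simp
  next
    fix c :: real and a assume c: "c \<ge> 0"
    have eq: "q (c *\<^sub>R a) = c * q a" if "q \<in> C" for q
      using C(2)[OF that] c unfolding sublin_def by blast
    show "g (c *\<^sub>R a) = c * g a"
    proof (cases "c = 0")
      case True
      obtain q0 where q0: "q0 \<in> C" using C(1) by blast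
      have "g 0 \<le> 0" using low[OF q0, of 0] sublin_0[of q0] C(2)[OF q0] by simp
      moreover have "0 \<le> g 0" by (rule gr) (use C(2) sublin_0 in force)
      ultimately show ?thesis using True by simp
    next
      case False
      then have cp: "c > 0" using c by simp
      have "g (c *\<^sub>R a) / c \<le> g a"
        by (rule gr) (use low eq cp in \<open>force simp: field_simps\<close>)
      moreover have "c * g a \<le> g (c *\<^sub>R a)"
      proof (rule gr)
        fix q assume "q \<in> C"
        then show "c * g a \<le> q (c *\<^sub>R a)" using low[of q a] eq[of q] cp by simp
      qed
      ultimately show ?thesis using cp by (simp add: field_simps)
    qed
  qed
qed

lemma zorn_min:
  assumes p: "sublin p"
  shows "\<exists>m. sublin m \<and> (\<forall>w. m w \<le> p w) \<and> (\<forall>q. sublin q \<and> (\<forall>w. q w \<le> m w) \<longrightarrow> q = m)"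
proof -
  define P where "P = {q. sublin q \<and> (\<forall>w. q w \<le> p w)}"
  define r where "r = {(q1, q2). q1 \<in> P \<and> q2 \<in> P \<and> (\<forall>w. q2 w \<le> q1 w)}"
  have F: "Field r = P"
    unfolding r_def Field_def by auto
  have po: "Partial_order r"
    unfolding partial_order_on_def preorder_on_def refl_on_def trans_on_def antisym_on_def F
    by (auto simp: r_def intro!: ext intro: order_trans antisym)
  have "\<exists>m\<in>Field r. \<forall>a\<in>Field r. (m, a) \<in> r \<longrightarrow> a = m"
  proof (rule Zorns_po_lemma[OF po])
    fix C assume "C \<in> Chains r"
    then have ch: "\<And>a b. a \<in> C \<Longrightarrow> b \<in> C \<Longrightarrow> (a, b) \<in> r \<or> (b, a) \<in> r"
      unfolding Chains_def by blast
    show "\<exists>u\<in>Field r. \<forall>a\<in>C. (a, u) \<in> r"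
    proof (cases "C = {}")
      case True
      then show ?thesis using p F by (auto simp: P_def)
    next
      case False
      have CP: "\<And>q. q \<in> C \<Longrightarrow> sublin q \<and> (\<forall>w. q w \<le> p w)"
        using ch unfolding r_def P_def by blast
      have ch2: "\<And>q1 q2. q1 \<in> C \<Longrightarrow> q2 \<in> C \<Longrightarrow> (\<forall>w. q1 w \<le> q2 w) \<or> (\<forall>w. q2 w \<le> q1 w)"
        using ch unfolding r_def by blast
      have G1: "sublin (\<lambda>w. INF q\<in>C. q w)" by (rule chain_inf_sublin(1)[OF False CP ch2])
      have G2: "\<And>q w. q \<in> C \<Longrightarrow> (INF q\<in>C. q w) \<le> q w"
        by (rule chain_inf_sublin(2)[OF False CP ch2])
      define g where "g = (\<lambda>w. INF q\<in>C. q w)"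
      obtain q0 where q0: "q0 \<in> C" using False by blast
      have gP: "g \<in> P" unfolding P_def g_def
        using G1 G2[OF q0] CP[OF q0] by (force intro: order_trans)
      have "\<forall>a\<in>C. (a, g) \<in> r"
        using gP G2 CP unfolding r_def P_def g_def by auto
      moreover have "g \<in> Field r" using gP F by simp
      ultimately show ?thesis by blast
    qed
  qed
  then obtain m where m: "m \<in> P" and mm: "\<And>a. a \<in> P \<Longrightarrow> (m, a) \<in> r \<Longrightarrow> a = m"
    unfolding F by blast
  show ?thesis
  proof (intro exI[of _ m] conjI allI impI)
    show "sublin m" "m w \<le> p w" for w using m by (auto simp: P_def)
    fix q assume q: "sublin q \<and> (\<forall>w. q w \<le> m w)"
    then have "q \<in> P" using m unfolding P_def by (force intro: order_trans)
    then show "q = m" using mm[of q] q m unfolding r_def by blast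
  qed
qed

lemma min_linear:
  assumes m: "sublin m" and mm: "\<forall>q. sublin q \<and> (\<forall>w. q w \<le> m w) \<longrightarrow> q = m"
  shows "m (a + b) = m a + m b" "m (c *\<^sub>R a) = c * m a"
proof -
  have neg: "m (- z) = - m z" for z
  proof -
    have "rr m z = m" using mm rr_sublin[OF m, of z] rr_below[OF m, of z] by blast
    then have "m (- z) \<le> - m z" using rr_negz[OF m, of z] by simp
    then show ?thesis using sublin_neg[OF m, of "- z"] by simp
  qed
  have sub: "m (a + b) \<le> m a + m b" for a b using m unfolding sublin_def by blast
  show "m (a + b) = m a + m b"
    using sub[of a b] sub[of "- a" "- b"] neg[of "a + b"] neg[of a] neg[of b] by (simp add: add.commute)
  show "m (c *\<^sub>R a) = c * m a"
  proof (cases "c \<ge> 0")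
    case True then show ?thesis using m unfolding sublin_def by blast
  next
    case False
    then have "m ((- c) *\<^sub>R (- a)) = (- c) * m (- a)" using m unfolding sublin_def
      by (metis le_minus_iff linorder_le_cases neg_0_le_iff_le)
    then show ?thesis using neg[of a] by simp
  qed
qed

lemma exists_functional:
  fixes v :: "'a::real_normed_vector"
  assumes v: "v \<noteq> 0"
  shows "\<exists>f :: 'a \<Rightarrow> real. bounded_linear f \<and> f v \<noteq> 0"
proof -
  have sn: "sublin (norm :: 'a \<Rightarrow> real)"
    unfolding sublin_def by (auto simp: norm_triangle_ineq)
  define p0 where "p0 = rr norm v"
  have sp0: "sublin p0" unfolding p0_def by (rule rr_sublin[OF sn])
  obtain m where m: "sublin m" "\<forall>w. m w \<le> p0 w" "\<forall>q. sublin q \<and> (\<forall>w. q w \<le> m w) \<longrightarrow> q = m"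
    using zorn_min[OF sp0] by blast
  note lin = min_linear[OF m(1) m(3)]
  have mn: "m w \<le> norm w" for w
    using m(2) rr_below[OF sn, of v w] unfolding p0_def by (metis order_trans)
  have "m (- v) \<le> - norm v"
    using m(2) rr_negz[OF sn, of v] unfolding p0_def by (metis order_trans)
  moreover have "m (- v) = - m v" using lin(2)[of "-1" v] by simp
  ultimately have mv: "m v \<noteq> 0" proof -
    assume a: "m (- v) \<le> - norm v" "m (- v) = - m v"
    have "norm v > 0" using v by simp
    then show ?thesis using a by linarith
  qed
  have "bounded_linear m"
  proof (rule bounded_linear_intro[where K=1])
    show "m (x + y) = m x + m y" for x y by (rule lin(1))
    show "m (r *\<^sub>R x) = r *\<^sub>R m x" for r x using lin(2) by simp
    show "norm (m x) \<le> norm x * 1" for x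
      using mn[of x] mn[of "- x"] lin(2)[of "-1" x] by simp
  qed
  then show ?thesis using mv by blast
qed


lemma ld_mono: "A \<subseteq> B \<Longrightarrow> lower_density A \<le> lower_density B"
  unfolding lower_density_def
proof (rule Liminf_mono, rule always_eventually, intro allI)
  fix n assume "A \<subseteq> B"
  then have "card (A \<inter> {..<n}) \<le> card (B \<inter> {..<n})" by (intro card_mono) auto
  then show "ereal (real (card (A \<inter> {..<n})) / real n) \<le> ereal (real (card (B \<inter> {..<n})) / real n)"
    by (simp add: divide_right_mono)
qed

lemma ld_pos_ne: "lower_density A > 0 \<Longrightarrow> A \<noteq> {}"
  unfolding lower_density_def by (auto simp: Liminf_const)

lemma funpow_lin0: "bounded_linear (T :: 'a::real_normed_vector \<Rightarrow> 'a) \<Longrightarrow> (T ^^ n) 0 = 0"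
proof (induction n)
  case 0 then show ?case by simp
next
  case (Suc n)
  have "T 0 = 0" using linear_0[OF bounded_linear.linear[OF Suc.prems]] .
  then show ?case using Suc by simp
qed

lemma funpow_conj:
  assumes "\<And>v. Li (L v) = v" "\<And>v. L (Li v) = v"
  shows "((\<lambda>v. L (S (Li v))) ^^ n) w = L ((S ^^ n) (Li w))"
  by (induction n) (auto simp: assms)

lemma box_lemma:
  fixes T :: "nat \<Rightarrow> 'a::topological_space \<Rightarrow> 'a"
  assumes hx: "\<forall>W. openin (product_topology (\<lambda>_. euclidean) {..<N}) W \<and> W \<noteq> {} \<longrightarrow>
        lower_density {n. (\<lambda>i\<in>{..<N}. (T i ^^ n) x) \<in> W} > 0"
    and B: "\<And>i. open (B i)" "\<And>i. B i \<noteq> {}"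
  shows "lower_density {n. \<forall>i<N. (T i ^^ n) x \<in> B i} > 0"
proof -
  have o: "openin (product_topology (\<lambda>_. euclidean) {..<N}) (PiE {..<N} B)"
    using B(1) by (auto simp: openin_PiE_gen open_openin[symmetric])
  have ne: "PiE {..<N} B \<noteq> {}" using B(2) by (simp add: PiE_eq_empty_iff)
  have "{n. (\<lambda>i\<in>{..<N}. (T i ^^ n) x) \<in> PiE {..<N} B} = {n. \<forall>i<N. (T i ^^ n) x \<in> B i}"
    by auto
  moreover have "lower_density {n. (\<lambda>i\<in>{..<N}. (T i ^^ n) x) \<in> PiE {..<N} B} > 0"
    using hx o ne by blast
  ultimately show ?thesis by simp
qed

lemma base_lemma:
  fixes d :: "nat \<Rightarrow> 'a::metric_space"
  assumes dense: "\<And>U. open U \<Longrightarrow> U \<noteq> {} \<Longrightarrow> \<exists>k. d k \<in> U"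
    and U: "open U" "v \<in> U"
  shows "\<exists>k m. v \<in> ball (d k) (1 / real (Suc m)) \<and> ball (d k) (1 / real (Suc m)) \<subseteq> U"
proof -
  obtain e where e: "e > 0" "ball v e \<subseteq> U" using U open_contains_ball by blast
  obtain n0 where n0: "n0 > 0" "inverse (real n0) < e / 2" using ex_inverse_of_nat_less[of "e/2"] e by auto
  define m where "m = n0 - 1"
  have m: "inverse (real (Suc m)) < e / 2" using n0 by (simp add: m_def)
  define r where "r = 1 / real (Suc m)"
  have r: "r > 0" "r < e / 2" using m by (auto simp: r_def field_simps)
  obtain k where k: "d k \<in> ball v r" using dense[of "ball v r"] r by auto
  have "v \<in> ball (d k) r" using k by (simp add: dist_commute)
  moreover have "ball (d k) r \<subseteq> U"
  proof
    fix u assume "u \<in> ball (d k) r"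
    then have "dist v u < e" using k r dist_triangle[of v u "d k"] by simp
    then show "u \<in> U" using e by auto
  qed
  ultimately show ?thesis unfolding r_def by blast
qed

lemma inv_pair:
  fixes f :: "'a::real_normed_vector \<Rightarrow> real"
  assumes f: "bounded_linear f" and fx: "f x \<noteq> 0" and fy: "f y \<noteq> 0"
  defines "L \<equiv> (\<lambda>v. v + (f v / f y) *\<^sub>R (x - y))"
    and "Li \<equiv> (\<lambda>v. v - (f v / f x) *\<^sub>R (x - y))"
  shows "\<And>v. Li (L v) = v" "\<And>v. L (Li v) = v" "L y = x" "Li x = y"
    "bounded_linear L" "bounded_linear Li"
proof -
  interpret f: bounded_linear f by (rule f)
  fix v
  have e1: "f (L v) = f v * f x / f y"
    unfolding L_def using fy by (simp add: f.add f.scale f.diff field_simps)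
  show "Li (L v) = v"
    unfolding Li_def e1 using fx fy by (simp add: L_def field_simps)
  have e2: "f (Li v) = f v * f y / f x"
    unfolding Li_def using fx by (simp add: f.add f.scale f.diff field_simps)
  show "L (Li v) = v"
    unfolding L_def e2 using fx fy by (simp add: Li_def field_simps)
next
  show "L y = x" unfolding L_def using fy by simp
  show "Li x = y" unfolding Li_def using fx by simp
  have b1: "bounded_linear (\<lambda>v. (f v / c) *\<^sub>R (x - y))" for c
    using bounded_linear_compose[OF bounded_linear_scaleR_left[of "x - y"] bounded_linear_compose[OF bounded_linear_divide[of c] f]]
    by (simp add: o_def)
  show "bounded_linear L" unfolding L_def by (rule bounded_linear_add[OF bounded_linear_ident b1])
  show "bounded_linear Li" unfolding Li_def by (rule bounded_linear_sub[OF bounded_linear_ident b1])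
qed

theorem corollary6p2:
  fixes T :: "nat \<Rightarrow> 'a::banach \<Rightarrow> 'a" and N :: nat
  assumes "\<exists>S :: 'a \<Rightarrow> 'a. bounded_linear S \<and> hereditarily_frequently_hypercyclic S"
    and "N \<ge> 1"
    and "\<forall>i<N. bounded_linear (T i)"
    and "d_frequently_hypercyclic T N"
  shows "\<exists>S :: 'a \<Rightarrow> 'a. bounded_linear S \<and> d_frequently_hypercyclic (T(N := S)) (Suc N)"
proof -
  obtain S0 :: "'a \<Rightarrow> 'a" where S0: "bounded_linear S0" "hereditarily_frequently_hypercyclic S0"
    using assms(1) by blast
  obtain x where hx: "\<forall>W. openin (product_topology (\<lambda>_. euclidean) {..<N}) W \<and> W \<noteq> {} \<longrightarrow>
        lower_density {n. (\<lambda>i\<in>{..<N}. (T i ^^ n) x) \<in> W} > 0"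
    using assms(4) unfolding d_frequently_hypercyclic_def by blast
  have N0: "0 < N" using assms(2) by simp
  show ?thesis
  proof (cases "\<forall>v::'a. v = 0")
    case True
    have "d_frequently_hypercyclic (T(N := id)) (Suc N)"
      unfolding d_frequently_hypercyclic_def
    proof (intro exI[of _ x] allI impI)
      fix W :: "(nat \<Rightarrow> 'a) set" assume W: "openin (product_topology (\<lambda>_. euclidean) {..<Suc N}) W \<and> W \<noteq> {}"
      then obtain w where w: "w \<in> W" by blast
      have wt: "w \<in> PiE {..<Suc N} (\<lambda>_. UNIV)"
        using W w openin_subset by fastforce
      have "(\<lambda>i\<in>{..<Suc N}. ((T(N := id)) i ^^ n) x) = w" for n
      proof (rule PiE_ext[OF _ wt])
        show "(\<lambda>i\<in>{..<Suc N}. ((T(N := id)) i ^^ n) x) \<in> PiE {..<Suc N} (\<lambda>_. UNIV)" by simp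
        fix i show "(\<lambda>i\<in>{..<Suc N}. ((T(N := id)) i ^^ n) x) i = w i" using True by metis
      qed
      then have eq: "{n. (\<lambda>i\<in>{..<Suc N}. ((T(N := id)) i ^^ n) x) \<in> W} = UNIV" using w by simp
      have "lower_density {n. \<forall>i<N. (T i ^^ n) x \<in> UNIV} > 0"
        by (rule box_lemma[OF hx]) auto
      also have "\<dots> \<le> lower_density {n. (\<lambda>i\<in>{..<Suc N}. ((T(N := id)) i ^^ n) x) \<in> W}"
        unfolding eq by (rule ld_mono) auto
      finally show "lower_density {n. (\<lambda>i\<in>{..<Suc N}. ((T(N := id)) i ^^ n) x) \<in> W} > 0" .
    qed
    moreover have "bounded_linear (id :: 'a \<Rightarrow> 'a)" unfolding id_def by (rule bounded_linear_ident)
    ultimately show ?thesis by blast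
  next
    case False
    then obtain w0 :: 'a where w0: "w0 \<noteq> 0" by blast
    define d where "d k = (T 0 ^^ k) x" for k
    have dense: "\<exists>k. d k \<in> U" if "open U" "U \<noteq> {}" for U
    proof -
      have "lower_density {n. \<forall>i<N. (T i ^^ n) x \<in> (if i = 0 then U else UNIV)} > 0"
        by (rule box_lemma[OF hx]) (use that in auto)
      from ld_pos_ne[OF this] obtain n where "\<forall>i<N. (T i ^^ n) x \<in> (if i = 0 then U else UNIV)"
        by blast
      then show ?thesis using N0 unfolding d_def by (metis (full_types))
    qed
    define bc where "bc c = ball (d (fst c)) (1 / real (Suc (snd c)))" for c :: "nat \<times> nat"
    have base: "\<exists>c. v \<in> bc c \<and> bc c \<subseteq> U" if "open U" "v \<in> U" for U v
      using base_lemma[OF dense that] unfolding bc_def by (metis fst_conv snd_conv)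
    have bco: "open (bc c)" "bc c \<noteq> {}" for c
      unfolding bc_def by auto
    define U0 where "U0 = ball w0 (norm w0 / 2)"
    have U0: "open U0" "w0 \<in> U0" "0 \<notin> U0" using w0 by (auto simp: U0_def)
    define V where "V j = bc (snd (from_nat j :: (nat \<times> nat) list \<times> (nat \<times> nat)))" for j
    define A where "A j = {n. \<forall>i<N. (T i ^^ n) x \<in> bc (fst (from_nat j :: (nat \<times> nat) list \<times> (nat \<times> nat)) ! i)}" for j
    have VA: "open (V j) \<and> V j \<noteq> {} \<and> lower_density (A j) > 0" for j
      unfolding V_def A_def
      by (intro conjI bco box_lemma[OF hx])
    obtain y where hy: "\<And>j. lower_density (visits S0 y (V j) \<inter> A j) > 0"
      using S0(2) VA unfolding hereditarily_frequently_hypercyclic_def by blast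
    have y0: "y \<noteq> 0"
    proof
      assume "y = 0"
      obtain c where c: "w0 \<in> bc c" "bc c \<subseteq> U0" using base U0 by blast
      define j where "j = to_nat (([] :: (nat \<times> nat) list), c)"
      have "V j = bc c" unfolding V_def j_def by simp
      then obtain n where "(S0 ^^ n) y \<in> bc c" using ld_pos_ne[OF hy[of j]] unfolding visits_def by blast
      then show False using \<open>y = 0\<close> funpow_lin0[OF S0(1)] c U0 by auto
    qed
    have x0: "x \<noteq> 0"
    proof
      assume "x = 0"
      obtain k where "d k \<in> U0" using dense U0 by blast
      moreover have "d k = 0" unfolding d_def \<open>x = 0\<close> using funpow_lin0 assms(3) N0 by blast
      ultimately show False using U0 by simp
    qed
    obtain g :: "'a \<Rightarrow> real" where g: "bounded_linear g" "g x \<noteq> 0" using exists_functional[OF x0] by blast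
    obtain h :: "'a \<Rightarrow> real" where h: "bounded_linear h" "h y \<noteq> 0" using exists_functional[OF y0] by blast
    define f where "f = (if g y \<noteq> 0 then g else if h x \<noteq> 0 then h else (\<lambda>v. g v + h v))"
    have f: "bounded_linear f" "f x \<noteq> 0" "f y \<noteq> 0"
      using g h unfolding f_def by (auto intro: bounded_linear_add)
    define L where "L = (\<lambda>v. v + (f v / f y) *\<^sub>R (x - y))"
    define Li where "Li = (\<lambda>v. v - (f v / f x) *\<^sub>R (x - y))"
    have LL: "\<And>v. Li (L v) = v" "\<And>v. L (Li v) = v" "L y = x" "Li x = y"
      "bounded_linear L" "bounded_linear Li"
      unfolding L_def Li_def by (rule inv_pair[OF f])+
    define K where "K = (\<lambda>v. L (S0 (Li v)))"
    have Kb: "bounded_linear K"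
      unfolding K_def using bounded_linear_compose[OF LL(5) bounded_linear_compose[OF S0(1) LL(6)]]
      by (simp add: o_def)
    have Kn: "(K ^^ n) x = L ((S0 ^^ n) y)" for n
    proof -
      have "((\<lambda>v. L (S0 (Li v))) ^^ n) x = L ((S0 ^^ n) (Li x))"
        by (rule funpow_conj) (rule LL(1), rule LL(2))
      then show ?thesis unfolding K_def LL(4) .
    qed
    have "d_frequently_hypercyclic (T(N := K)) (Suc N)"
      unfolding d_frequently_hypercyclic_def
    proof (intro exI[of _ x] allI impI)
      fix W :: "(nat \<Rightarrow> 'a) set" assume W: "openin (product_topology (\<lambda>_. euclidean) {..<Suc N}) W \<and> W \<noteq> {}"
      then obtain z where z: "z \<in> W" by blast
      have "\<exists>U. finite {i \<in> {..<Suc N}. U i \<noteq> topspace euclidean} \<and>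
                 (\<forall>i \<in> {..<Suc N}. openin euclidean (U i)) \<and> z \<in> Pi\<^sub>E {..<Suc N} U \<and> Pi\<^sub>E {..<Suc N} U \<subseteq> W"
        using iffD1[OF openin_product_topology_alt, OF W[THEN conjunct1], rule_format, OF z] .
      then obtain U where U: "\<forall>i\<in>{..<Suc N}. openin euclidean (U i)" "z \<in> PiE {..<Suc N} U"
        "PiE {..<Suc N} U \<subseteq> W"
        by (elim exE conjE) (rule that)
      have Uo: "open (U i)" "z i \<in> U i" if "i < Suc N" for i
      proof -
        show "open (U i)" using U(1) that by simp
        show "z i \<in> U i" using PiE_mem[OF U(2)] that by simp
      qed
      have ex: "\<exists>c. z i \<in> bc c \<and> bc c \<subseteq> U i" if "i < N" for i
        using base[OF Uo(1) Uo(2)] that by (meson less_SucI)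
      define c where "c i = (SOME c. z i \<in> bc c \<and> bc c \<subseteq> U i)" for i
      have c: "z i \<in> bc (c i) \<and> bc (c i) \<subseteq> U i" if "i < N" for i
        unfolding c_def by (rule someI_ex[OF ex[OF that]])
      have Oo: "open (L -` U N)"
        by (rule open_vimage[OF Uo(1)]) (simp_all add: linear_continuous_on[OF LL(5)])
      have "Li (z N) \<in> L -` U N" using Uo(2)[of N] LL(2) by simp
      then obtain c' where c': "Li (z N) \<in> bc c'" "bc c' \<subseteq> L -` U N"
        using base[OF Oo] by blast
      define j where "j = to_nat (map c [0..<N], c')"
      have Vj: "V j = bc c'" unfolding V_def j_def by simp
      have Aj: "A j = {n. \<forall>i<N. (T i ^^ n) x \<in> bc (c i)}" unfolding A_def j_def by simp
      have sub: "visits S0 y (V j) \<inter> A j \<subseteq> {n. (\<lambda>i\<in>{..<Suc N}. ((T(N := K)) i ^^ n) x) \<in> W}"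
      proof
        fix n assume n: "n \<in> visits S0 y (V j) \<inter> A j"
        have "(\<lambda>i\<in>{..<Suc N}. ((T(N := K)) i ^^ n) x) \<in> PiE {..<Suc N} U"
        proof (subst restrict_PiE_iff, intro ballI)
          fix i assume i: "i \<in> {..<Suc N}"
          show "((T(N := K)) i ^^ n) x \<in> U i"
          proof (cases "i = N")
            case True
            have "(S0 ^^ n) y \<in> bc c'" using n Vj unfolding visits_def by auto
            then show ?thesis using True c' Kn by auto
          next
            case False
            then have "i < N" using i by simp
            then show ?thesis using n Aj c False by auto
          qed
        qed
        then show "n \<in> {n. (\<lambda>i\<in>{..<Suc N}. ((T(N := K)) i ^^ n) x) \<in> W}" using U(3) by (simp only: mem_Collect_eq subset_iff)
      qed
      show "lower_density {n. (\<lambda>i\<in>{..<Suc N}. ((T(N := K)) i ^^ n) x) \<in> W} > 0"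
        using hy[of j] ld_mono[OF sub] by simp
    qed
    then show ?thesis using Kb by blast
  qed
qed

end
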